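(* Let $G$ be a finite directed multigraph and let $c:\mathcal M_G\to\mathbb R$ be an additive map such that $c(\mathcal C)>-|\mathcal C|$ for every simple directed cycle $\mathcal C$ of $G$. Then $c$ extends to an additive map $c:\mathbb Z^{E(G)}\to\mathbb R$ with $c(e)>-1$ for every $e\in E(G)$.
   Context: Elements of $\mathbb Z^{E(G)}$ are formal sums $\sum_{e\in E(G)}m_e\,e$. A simple directed cycle $\mathcal C$ is identified with the formal sum $\sum_{e\in\mathcal C}e$, and $|\mathcal C|$ is its number of edges. $\mathcal M_G\subseteq\mathbb Z^{E(G)}$ is the $\mathbb Z$-submodule generated by all simple directed cycles of $G$. *)

theory Defs
  imports Complex_Main "HOL-Library.Function_Algebras"
begin

text \<open>A finite directed multigraph is given by a finite type of edges 'e and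
  tail/head maps into a vertex type 'v (loops and parallel edges allowed).
  Elements of Z^E(G) are functions 'e \<Rightarrow> int.\<close>

definition simple_dicycle :: "('e \<Rightarrow> 'v) \<Rightarrow> ('e \<Rightarrow> 'v) \<Rightarrow> 'e list \<Rightarrow> bool" where
  "simple_dicycle src tgt es \<longleftrightarrow>
     es \<noteq> [] \<and> distinct es \<and> distinct (map src es) \<and>
     (\<forall>i < length es. tgt (es ! i) = src (es ! ((i + 1) mod length es)))"

definition cycle_vec :: "'e list \<Rightarrow> ('e \<Rightarrow> int)" where
  "cycle_vec es = (\<lambda>e. if e \<in> set es then 1 else 0)"

definition edge_vec :: "'e \<Rightarrow> ('e \<Rightarrow> int)" where
  "edge_vec e = (\<lambda>e'. if e' = e then 1 else 0)"

inductive_set cycle_module :: "('e \<Rightarrow> 'v) \<Rightarrow> ('e \<Rightarrow> 'v) \<Rightarrow> ('e \<Rightarrow> int) set"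
  for src :: "'e \<Rightarrow> 'v" and tgt :: "'e \<Rightarrow> 'v" where
  zero: "0 \<in> cycle_module src tgt"
| cyc: "simple_dicycle src tgt es \<Longrightarrow> cycle_vec es \<in> cycle_module src tgt"
| add: "x \<in> cycle_module src tgt \<Longrightarrow> y \<in> cycle_module src tgt \<Longrightarrow> x + y \<in> cycle_module src tgt"
| neg: "x \<in> cycle_module src tgt \<Longrightarrow> - x \<in> cycle_module src tgt"

definition additive_on :: "('e \<Rightarrow> int) set \<Rightarrow> (('e \<Rightarrow> int) \<Rightarrow> real) \<Rightarrow> bool" where
  "additive_on M c \<longleftrightarrow> (\<forall>x\<in>M. \<forall>y\<in>M. c (x + y) = c x + c y)"

end

theory Submission
  imports Defs
begin


fun walk :: "('e \<Rightarrow> 'v) \<Rightarrow> ('e \<Rightarrow> 'v) \<Rightarrow> 'e list \<Rightarrow> bool" where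
  "walk s t [] = True"
| "walk s t [e] = True"
| "walk s t (e1 # e2 # es) = (t e1 = s e2 \<and> walk s t (e2 # es))"

lemma walk_append:
  "walk s t (xs @ ys) \<longleftrightarrow> walk s t xs \<and> walk s t ys \<and> (xs \<noteq> [] \<and> ys \<noteq> [] \<longrightarrow> t (last xs) = s (hd ys))"
proof (induction xs)
  case Nil then show ?case by simp
next
  case (Cons x xs)
  then show ?case by (cases xs; cases ys) auto
qed

lemma walk_nth: "walk s t es \<Longrightarrow> Suc i < length es \<Longrightarrow> t (es ! i) = s (es ! Suc i)"
proof (induction s t es arbitrary: i rule: walk.induct)
  case (3 s t e1 e2 es)
  then show ?case by (cases i) auto
qed auto

lemma simple_from_walk:
  assumes "es \<noteq> []" "distinct (map src es)" "walk src tgt es" "tgt (last es) = src (hd es)"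
  shows "simple_dicycle src tgt es"
  unfolding simple_dicycle_def
proof (intro conjI allI impI)
  show "distinct es" using assms(2) by (simp add: distinct_map)
  fix i assume i: "i < length es"
  show "tgt (es ! i) = src (es ! ((i + 1) mod length es))"
  proof (cases "Suc i < length es")
    case True then show ?thesis using walk_nth[OF assms(3) True] by simp
  next
    case False
    then have "i = length es - 1" using i by simp
    then show ?thesis using assms(1,4) by (simp add: last_conv_nth hd_conv_nth)
  qed
qed (use assms in auto)

lemma walk_split:
  assumes "walk src tgt es" "\<not> distinct (map src es)"
  shows "\<exists>A B C. es = A @ B @ C \<and> B \<noteq> [] \<and> C \<noteq> [] \<and> walk src tgt B \<and>
     tgt (last B) = src (hd B) \<and> walk src tgt (A @ C) \<and> length B \<le> length es
     \<and> (A = [] \<longrightarrow> src (hd C) = src (hd B))"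
proof -
  obtain xs ys zs y where d: "map src es = xs @ [y] @ ys @ [y] @ zs"
    using not_distinct_decomp[OF assms(2)] by blast
  define A where "A = take (length xs) es"
  define B where "B = take (Suc (length ys)) (drop (length xs) es)"
  define C where "C = drop (length xs + Suc (length ys)) es"
  have len: "length es = length xs + length ys + length zs + 2"
    using arg_cong[OF d, of length] by simp
  have es: "es = A @ B @ C" unfolding A_def B_def C_def
    by (metis append_take_drop_id drop_drop add.commute)
  have mA: "map src A = xs" using d unfolding A_def by (metis append_eq_conv_conj take_map)
  have md: "map src (drop (length xs) es) = y # ys @ y # zs"
    using d by (simp add: drop_map[symmetric])
  have mB: "map src B = y # ys" unfolding B_def take_map[symmetric] md by simp
  have mC: "map src C = y # zs" unfolding C_def drop_map[symmetric] d by simp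
  have Bne: "B \<noteq> []" "C \<noteq> []" using mB mC by auto
  have w: "walk src tgt A" "walk src tgt B" "walk src tgt C"
    "A \<noteq> [] \<longrightarrow> tgt (last A) = src (hd (B @ C))" "tgt (last B) = src (hd C)"
  proof -
    have "walk src tgt (A @ B @ C)" using assms(1) es by simp
    then show "walk src tgt A" "walk src tgt B" "walk src tgt C"
    "A \<noteq> [] \<longrightarrow> tgt (last A) = src (hd (B @ C))" "tgt (last B) = src (hd C)"
      using Bne by (simp_all add: walk_append)
  qed
  have hB: "src (hd B) = y" "src (hd C) = y" using mB mC Bne
    by (metis list.sel(1) list.simps(9) neq_Nil_conv)+
  have 1: "A \<noteq> [] \<longrightarrow> tgt (last A) = src (hd C)" using w(4) hB Bne by simp
  have 2: "walk src tgt (A @ C)" using 1 w(1,3) walk_append[of src tgt A C] by blast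
  have 3: "tgt (last B) = src (hd B)" using w hB by simp
  have 4: "length B \<le> length es" unfolding es by simp
  show ?thesis using es Bne w(2) hB 1 2 3 4 by blast
qed

lemma closed_nonneg:
  fixes a :: "'e \<Rightarrow> real"
  assumes H: "\<And>es. simple_dicycle src tgt es \<Longrightarrow> 0 \<le> sum_list (map a es)"
  shows "walk src tgt es \<Longrightarrow> es \<noteq> [] \<Longrightarrow> tgt (last es) = src (hd es) \<Longrightarrow> 0 \<le> sum_list (map a es)"
proof (induction "length es" arbitrary: es rule: less_induct)
  case less
  show ?case
  proof (cases "distinct (map src es)")
    case True
    then show ?thesis using H simple_from_walk less.prems by blast
  next
    case False
    obtain A B C where s: "es = A @ B @ C" "B \<noteq> []" "C \<noteq> []" "walk src tgt B"
      "tgt (last B) = src (hd B)" "walk src tgt (A @ C)" "(A = [] \<longrightarrow> src (hd C) = src (hd B))"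
      using walk_split[OF less.prems(1) False] by blast
    have "0 \<le> sum_list (map a B)"
      using less.hyps[of B] s by simp
    moreover have "0 \<le> sum_list (map a (A @ C))"
    proof (rule less.hyps)
      show "length (A @ C) < length es" using s by simp
      show "tgt (last (A @ C)) = src (hd (A @ C))"
        using less.prems(3) s by (cases A) auto
    qed (use s in simp_all)
    ultimately show ?thesis using s by simp
  qed
qed

lemma reduce_walk:
  fixes a :: "'e \<Rightarrow> real"
  assumes H: "\<And>es. simple_dicycle src tgt es \<Longrightarrow> 0 \<le> sum_list (map a es)"
  shows "walk src tgt es \<Longrightarrow> \<exists>es'. walk src tgt es' \<and> distinct (map src es') \<and>
     (es' = [] \<or> (es \<noteq> [] \<and> tgt (last es') = tgt (last es))) \<and> sum_list (map a es') \<le> sum_list (map a es)"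
proof (induction "length es" arbitrary: es rule: less_induct)
  case less
  show ?case
  proof (cases "distinct (map src es)")
    case True
    then show ?thesis using less.prems by (intro exI[where x=es]) auto
  next
    case False
    obtain A B C where s: "es = A @ B @ C" "B \<noteq> []" "C \<noteq> []" "walk src tgt B"
      "tgt (last B) = src (hd B)" "walk src tgt (A @ C)"
      using walk_split[OF less.prems(1) False] by blast
    have "0 \<le> sum_list (map a B)"
      using closed_nonneg[OF H, where es=B] s by simp
    moreover obtain es' where "walk src tgt es'" "distinct (map src es')"
     "(es' = [] \<or> (A @ C \<noteq> [] \<and> tgt (last es') = tgt (last (A @ C))))"
     "sum_list (map a es') \<le> sum_list (map a (A @ C))"
      using less.hyps[of "A @ C"] s by auto
    ultimately show ?thesis using s by (intro exI[where x=es']) auto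
  qed
qed

lemma finite_distinct_lists: "finite {xs :: ('e::finite) list. distinct xs}"
proof (rule finite_subset)
  show "{xs :: 'e list. distinct xs} \<subseteq> {xs. set xs \<subseteq> UNIV \<and> length xs \<le> card (UNIV :: 'e set)}"
  proof safe
    fix xs :: "'e list" assume "distinct xs"
    then have "length xs = card (set xs)" by (simp add: distinct_card)
    also have "\<dots> \<le> card (UNIV :: 'e set)" by (rule card_mono) auto
    finally show "length xs \<le> card (UNIV :: 'e set)" .
  qed simp
  show "finite {xs. set xs \<subseteq> (UNIV :: 'e set) \<and> length xs \<le> card (UNIV :: 'e set)}"
    by (rule finite_lists_length_le) simp
qed

lemma bellman_ford:
  fixes a :: "'e::finite \<Rightarrow> real" and src tgt :: "'e \<Rightarrow> 'v"
  assumes H: "\<And>es. simple_dicycle src tgt es \<Longrightarrow> 0 \<le> sum_list (map a es)"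
  shows "\<exists>p. \<forall>e. p (tgt e) \<le> p (src e) + a e"
proof -
  define S where "S v = {es. walk src tgt es \<and> distinct (map src es) \<and> (es = [] \<or> tgt (last es) = v)}" for v
  define p where "p v = Min ((\<lambda>es. sum_list (map a es)) ` S v)" for v
  have fin: "finite (S v)" for v
    by (rule finite_subset[OF _ finite_distinct_lists]) (auto simp: S_def distinct_map)
  have ne: "[] \<in> S v" for v by (simp add: S_def)
  have le: "es \<in> S v \<Longrightarrow> p v \<le> sum_list (map a es)" for es v
    unfolding p_def using fin by simp
  have ex: "\<exists>es \<in> S v. p v = sum_list (map a es)" for v
  proof -
    have "p v \<in> (\<lambda>es. sum_list (map a es)) ` S v" unfolding p_def
      using fin ne by (intro Min_in) auto
    then show ?thesis by auto
  qed
  show ?thesis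
  proof (intro exI allI)
    fix e
    obtain es where es: "es \<in> S (src e)" "p (src e) = sum_list (map a es)" using ex by blast
    have "walk src tgt (es @ [e])" using es(1) by (auto simp: S_def walk_append)
    then obtain es' where es': "walk src tgt es'" "distinct (map src es')"
     "(es' = [] \<or> tgt (last es') = tgt e)"
     "sum_list (map a es') \<le> sum_list (map a (es @ [e]))"
    proof -
      from reduce_walk[OF H, where es="es @ [e]"] \<open>walk src tgt (es @ [e])\<close>
      obtain es' where "walk src tgt es'" "distinct (map src es')"
        "(es' = [] \<or> (es @ [e] \<noteq> [] \<and> tgt (last es') = tgt (last (es @ [e]))))"
        "sum_list (map a es') \<le> sum_list (map a (es @ [e]))" by blast
      then show ?thesis using that by auto
    qed
    have "es' \<in> S (tgt e)" using es' by (auto simp: S_def)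
    then have "p (tgt e) \<le> sum_list (map a es')" by (rule le)
    also have "\<dots> \<le> p (src e) + a e" using es' es by simp
    finally show "p (tgt e) \<le> p (src e) + a e" .
  qed
qed



definition sg :: "('e \<Rightarrow> int) set \<Rightarrow> bool" where
  "sg H \<longleftrightarrow> 0 \<in> H \<and> (\<forall>x\<in>H. \<forall>y\<in>H. x + y \<in> H) \<and> (\<forall>x\<in>H. - x \<in> H)"

definition smul :: "int \<Rightarrow> ('e \<Rightarrow> int) \<Rightarrow> ('e \<Rightarrow> int)" where
  "smul k x = (\<lambda>e. k * x e)"

lemma smul_simps:
  "smul 0 x = 0" "smul (k + l) x = smul k x + smul l x" "smul (- k) x = - smul k x"
  "smul k (x + y) = smul k x + smul k y" "smul 1 x = x" "smul k (smul l x) = smul (k * l) x"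
  "smul k x - smul l x = smul (k - l) x"
  by (auto simp: smul_def fun_eq_iff algebra_simps)

lemma sg_smul_nat: "sg H \<Longrightarrow> x \<in> H \<Longrightarrow> smul (int n) x \<in> H"
proof (induction n)
  case 0 then show ?case by (metis sg_def smul_simps(1) of_nat_0)
next
  case (Suc n)
  have "smul (int (Suc n)) x = smul (int n) x + x"
    by (simp add: smul_def fun_eq_iff algebra_simps)
  then show ?case using Suc.IH Suc.prems unfolding sg_def by metis
qed

lemma sg_smul: "sg H \<Longrightarrow> x \<in> H \<Longrightarrow> smul k x \<in> H"
proof (cases "k \<ge> 0")
  case True
  assume "sg H" "x \<in> H"
  then show ?thesis using sg_smul_nat[of H x "nat k"] True by simp
next
  case False
  assume a: "sg H" "x \<in> H"
  then have "smul (int (nat (-k))) x \<in> H" by (rule sg_smul_nat)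
  then have "- smul (-k) x \<in> H" using False a(1) by (simp add: sg_def)
  then show ?thesis by (simp add: smul_simps)
qed

lemma add_zero: "additive_on H f \<Longrightarrow> 0 \<in> H \<Longrightarrow> f 0 = 0"
  unfolding additive_on_def by (metis add.right_neutral add_cancel_right_right)

lemma add_neg: "sg H \<Longrightarrow> additive_on H f \<Longrightarrow> x \<in> H \<Longrightarrow> f (- x) = - f x"
proof -
  assume a: "sg H" "additive_on H f" "x \<in> H"
  then have "f (x + - x) = f x + f (- x)" unfolding sg_def additive_on_def by blast
  moreover have "f (x + - x) = 0" using add_zero[OF a(2)] a(1) unfolding sg_def by (metis right_minus)
  ultimately show ?thesis by simp
qed

lemma add_smul_nat: "sg H \<Longrightarrow> additive_on H f \<Longrightarrow> x \<in> H \<Longrightarrow> f (smul (int n) x) = real n * f x"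
proof (induction n)
  case 0 then show ?case using add_zero[of H f] by (metis sg_def smul_simps(1) of_nat_0 mult_zero_left of_nat_0)
next
  case (Suc n)
  have "smul (int (Suc n)) x = smul (int n) x + x"
    by (simp add: smul_def fun_eq_iff algebra_simps)
  moreover have "smul (int n) x \<in> H" using Suc sg_smul by blast
  ultimately have "f (smul (int (Suc n)) x) = f (smul (int n) x) + f x"
    using Suc.prems by (simp add: additive_on_def)
  then show ?case using Suc by (simp add: algebra_simps)
qed

lemma add_smul: "sg H \<Longrightarrow> additive_on H f \<Longrightarrow> x \<in> H \<Longrightarrow> f (smul k x) = real_of_int k * f x"
proof (cases "k \<ge> 0")
  case True
  assume "sg H" "additive_on H f" "x \<in> H"
  then show ?thesis using add_smul_nat[of H f x "nat k"] True by simp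
next
  case False
  assume a: "sg H" "additive_on H f" "x \<in> H"
  have "smul k x = - smul (int (nat (-k))) x" using False by (simp add: smul_simps(3)[symmetric])
  moreover have "f (- smul (int (nat (-k))) x) = - f (smul (int (nat (-k))) x)"
    using a sg_smul add_neg by blast
  ultimately show ?thesis using add_smul_nat[OF a, of "nat (-k)"] False by simp
qed

definition extsg :: "('e \<Rightarrow> int) set \<Rightarrow> ('e \<Rightarrow> int) \<Rightarrow> ('e \<Rightarrow> int) set" where
  "extsg H g = {h + smul k g | h k. h \<in> H}"

lemma extsg_sg: "sg H \<Longrightarrow> sg (extsg H g)"
  unfolding sg_def extsg_def
proof (intro conjI ballI)
  assume a: "0 \<in> H \<and> (\<forall>x\<in>H. \<forall>y\<in>H. x + y \<in> H) \<and> (\<forall>x\<in>H. - x \<in> H)"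
  show "0 \<in> {h + smul k g |h k. h \<in> H}" using a by (intro CollectI exI[where x=0]) (auto simp: smul_simps)
  fix x y assume "x \<in> {h + smul k g |h k. h \<in> H}" "y \<in> {h + smul k g |h k. h \<in> H}"
  then obtain h1 k1 h2 k2 where "x = h1 + smul k1 g" "y = h2 + smul k2 g" "h1 \<in> H" "h2 \<in> H" by blast
  then show "x + y \<in> {h + smul k g |h k. h \<in> H}" using a
    by (intro CollectI exI[where x="h1+h2"] exI[where x="k1+k2"]) (auto simp: smul_simps algebra_simps)
next
  assume a: "0 \<in> H \<and> (\<forall>x\<in>H. \<forall>y\<in>H. x + y \<in> H) \<and> (\<forall>x\<in>H. - x \<in> H)"
  fix x assume "x \<in> {h + smul k g |h k. h \<in> H}"
  then obtain h1 k1 where "x = h1 + smul k1 g" "h1 \<in> H" by blast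
  then show "- x \<in> {h + smul k g |h k. h \<in> H}" using a
    by (intro CollectI exI[where x="-h1"] exI[where x="-k1"]) (auto simp: smul_simps algebra_simps)
qed

lemma extsg_sub: "sg H \<Longrightarrow> H \<subseteq> extsg H g"
proof
  fix x assume "x \<in> H"
  moreover have "x = x + smul 0 g" by (metis smul_simps(1) add.right_neutral)
  ultimately show "x \<in> extsg H g" unfolding extsg_def by blast
qed

lemma extsg_mem: "sg H \<Longrightarrow> g \<in> extsg H g"
proof -
  assume "sg H"
  then have "0 \<in> H" by (simp add: sg_def)
  moreover have "g = 0 + smul 1 g" by (metis smul_simps(5) add_0)
  ultimately show "g \<in> extsg H g" unfolding extsg_def by blast
qed

lemma ext_step:
  assumes sgH: "sg H" and add: "additive_on H f"
  shows "\<exists>f'. additive_on (extsg H g) f' \<and> (\<forall>h\<in>H. f' h = f h)"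
proof -
  define t where "t = (if \<exists>n>0. smul n g \<in> H
     then (let n = SOME n. n > 0 \<and> smul n g \<in> H in f (smul n g) / real_of_int n) else 0)"
  have K: "f (smul m g) = real_of_int m * t" if m: "smul m g \<in> H" for m
  proof (cases "\<exists>n>0. smul n g \<in> H")
    case True
    define n where "n = (SOME n. n > 0 \<and> smul n g \<in> H)"
    have n: "n > 0" "smul n g \<in> H" using someI_ex[OF True] unfolding n_def by auto
    have t: "t = f (smul n g) / real_of_int n" using True unfolding t_def n_def by (simp add: Let_def)
    have "smul n (smul m g) = smul m (smul n g)" by (simp add: smul_simps mult.commute)
    then have "real_of_int n * f (smul m g) = real_of_int m * f (smul n g)"
      using add_smul[OF sgH add m, of n] add_smul[OF sgH add n(2), of m] by simp
    then have "f (smul m g) = real_of_int m * f (smul n g) / real_of_int n"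
      using n(1) by (simp add: field_simps)
    then show ?thesis using t by simp
  next
    case False
    have "m = 0"
    proof (rule ccontr)
      assume "m \<noteq> 0"
      show False
      proof (cases "m > 0")
        case True then show False using False m by blast
      next
        case F: False
        have "- smul m g \<in> H" using m sgH by (simp add: sg_def)
        then have "smul (-m) g \<in> H" by (simp add: smul_simps)
        then show False using False F \<open>m \<noteq> 0\<close> by force
      qed
    qed
    then show ?thesis using add_zero[OF add] sgH by (simp add: smul_simps sg_def)
  qed
  have W: "f h + real_of_int k * t = f h' + real_of_int k' * t"
    if "h \<in> H" "h' \<in> H" "h + smul k g = h' + smul k' g" for h h' k k'
  proof -
    have eq: "h + - h' = smul (k' - k) g" using that(3)
      by (simp add: smul_simps(7)[symmetric] algebra_simps)
    have "-h' \<in> H" "h + - h' \<in> H" using that sgH unfolding sg_def by blast+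
    then have "f (h + - h') = f h + f (- h')" using add that unfolding additive_on_def by blast
    then have "f (h + - h') = f h - f h'" using add_neg[OF sgH add that(2)] by simp
    then show ?thesis using K[of "k' - k"] eq \<open>h + - h' \<in> H\<close> by (simp add: algebra_simps)
  qed
  define f' where "f' x = (let (h, k) = SOME (h, k). h \<in> H \<and> x = h + smul k g in f h + real_of_int k * t)" for x
  have F: "f' x = f h + real_of_int k * t" if "h \<in> H" "x = h + smul k g" for x h k
  proof -
    have ex: "\<exists>p. (case p of (h, k) \<Rightarrow> h \<in> H \<and> x = h + smul k g)" using that by auto
    obtain h1 k1 where hk: "(SOME (h, k). h \<in> H \<and> x = h + smul k g) = (h1, k1)" by fastforce
    have "h1 \<in> H \<and> x = h1 + smul k1 g" using someI_ex[OF ex] hk by simp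
    then have "f' x = f h1 + real_of_int k1 * t" unfolding f'_def hk by simp
    also have "\<dots> = f h + real_of_int k * t" using W[of h1 h k1 k] that \<open>h1 \<in> H \<and> x = h1 + smul k1 g\<close> by simp
    finally show ?thesis .
  qed
  show ?thesis
  proof (intro exI conjI ballI)
    fix h assume "h \<in> H"
    then show "f' h = f h" using F[of h h 0] by (simp add: smul_simps)
  next
    show "additive_on (extsg H g) f'" unfolding additive_on_def extsg_def
    proof (intro ballI)
      fix x y assume "x \<in> {h + smul k g |h k. h \<in> H}" "y \<in> {h + smul k g |h k. h \<in> H}"
      then obtain h1 k1 h2 k2 where hk: "x = h1 + smul k1 g" "y = h2 + smul k2 g" "h1 \<in> H" "h2 \<in> H" by blast
      have "x + y = (h1 + h2) + smul (k1 + k2) g" using hk by (simp add: smul_simps algebra_simps)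
      moreover have "h1 + h2 \<in> H" using hk sgH by (simp add: sg_def)
      ultimately have "f' (x + y) = f (h1 + h2) + real_of_int (k1 + k2) * t" using F by blast
      also have "\<dots> = f' x + f' y" using F[OF hk(3,1)] F[OF hk(4,2)] add hk by (simp add: additive_on_def algebra_simps)
      finally show "f' (x + y) = f' x + f' y" .
    qed
  qed
qed

lemma ext_list:
  "sg H \<Longrightarrow> additive_on H f \<Longrightarrow> \<exists>H' f'. sg H' \<and> H \<subseteq> H' \<and> set gs \<subseteq> H' \<and> additive_on H' f' \<and> (\<forall>h\<in>H. f' h = f h)"
proof (induction gs arbitrary: H f)
  case Nil then show ?case by (intro exI[where x=H] exI[where x=f]) auto
next
  case (Cons g gs)
  obtain f1 where f1: "additive_on (extsg H g) f1" "\<forall>h\<in>H. f1 h = f h" using ext_step[OF Cons.prems] by blast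
  obtain H' f' where "sg H'" "extsg H g \<subseteq> H'" "set gs \<subseteq> H'" "additive_on H' f'" "\<forall>h\<in>extsg H g. f' h = f1 h"
    using Cons.IH[OF extsg_sg[OF Cons.prems(1)] f1(1)] by blast
  then show ?case using f1 extsg_sub[OF Cons.prems(1), of g] extsg_mem[OF Cons.prems(1), of g]
    by (intro exI[where x=H'] exI[where x=f']) auto
qed



lemma sum_app: "(sum g A) x = sum (\<lambda>i. g i x) A"
  by (induction A rule: infinite_finite_induct) auto

lemma sg_sum: "sg H \<Longrightarrow> \<forall>i\<in>A. g i \<in> H \<Longrightarrow> sum g A \<in> H"
proof (induction A rule: infinite_finite_induct)
  case (infinite A) then show ?case by (metis sum.infinite sg_def)
next
  case empty then show ?case by (metis sum.empty sg_def)
next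
  case (insert x F)
  then have "g x \<in> H" "sum g F \<in> H" by auto
  then show ?case using insert.hyps insert.prems(1) unfolding sg_def by (metis sum.insert)
qed

lemma add_sum: "sg H \<Longrightarrow> additive_on H f \<Longrightarrow> \<forall>i\<in>A. g i \<in> H \<Longrightarrow> f (sum g A) = (\<Sum>i\<in>A. f (g i))"
proof (induction A rule: infinite_finite_induct)
  case (infinite A) then show ?case using add_zero[of H f] by (metis sum.infinite sum.empty sg_def)
next
  case empty then show ?case using add_zero[of H f] by (metis sum.empty sg_def)
next
  case (insert x F)
  then have "g x \<in> H" "sum g F \<in> H" using sg_sum by auto
  then have "f (g x + sum g F) = f (g x) + f (sum g F)" using insert.prems(2)
    unfolding additive_on_def by blast
  moreover have "sum g (insert x F) = g x + sum g F" using insert.hyps by (rule sum.insert)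
  moreover have "(\<Sum>i\<in>insert x F. f (g i)) = f (g x) + (\<Sum>i\<in>F. f (g i))" using insert.hyps by (rule sum.insert)
  moreover have "f (sum g F) = (\<Sum>i\<in>F. f (g i))" using insert.IH insert.prems by simp
  ultimately show ?case by (simp only:)
qed

lemma sum_list_rotate1: "sum_list (rotate1 xs) = sum_list (xs :: real list)"
  by (cases xs) (simp_all add: add.commute)

lemma telescope:
  fixes p :: "'v \<Rightarrow> real"
  assumes "simple_dicycle src tgt es"
  shows "(\<Sum>e\<in>set es. p (src e) - p (tgt e)) = 0"
proof -
  have d: "distinct es" "es \<noteq> []" using assms by (auto simp: simple_dicycle_def)
  have ch: "\<forall>i < length es. tgt (es ! i) = src (es ! ((i + 1) mod length es))"
    using assms by (simp add: simple_dicycle_def)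
  have "map (\<lambda>e. p (tgt e)) es = rotate 1 (map (\<lambda>e. p (src e)) es)"
  proof (rule nth_equalityI)
    fix i assume "i < length (map (\<lambda>e. p (tgt e)) es)"
    then have i: "i < length es" by simp
    have "rotate 1 (map (\<lambda>e. p (src e)) es) ! i = map (\<lambda>e. p (src e)) es ! ((i + 1) mod length es)"
      using i by (simp add: nth_rotate1)
    also have "\<dots> = p (src (es ! ((i + 1) mod length es)))" using d(2) by simp
    finally show "map (\<lambda>e. p (tgt e)) es ! i = rotate 1 (map (\<lambda>e. p (src e)) es) ! i"
      using ch i by simp
  qed simp
  then have "sum_list (map (\<lambda>e. p (tgt e)) es) = sum_list (map (\<lambda>e. p (src e)) es)"
    by (simp add: sum_list_rotate1)
  then show ?thesis using d(1)
    by (simp add: sum_subtractf sum.distinct_set_conv_list)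
qed



lemma sg_cm: "sg (cycle_module src tgt)"
  unfolding sg_def by (auto intro: cycle_module.intros)

lemma cycle_vec_sum: "cycle_vec es = (\<Sum>e\<in>set es. edge_vec e)"
proof (rule ext)
  fix x
  have "cycle_vec es x = (\<Sum>e\<in>set es. edge_vec e x)" by (simp add: cycle_vec_def edge_vec_def)
  then show "cycle_vec es x = (\<Sum>e\<in>set es. edge_vec e) x" by (simp only: sum_app)
qed

theorem mainTheorem12:
  fixes src :: "'e::finite \<Rightarrow> 'v" and tgt :: "'e \<Rightarrow> 'v"
    and c :: "('e \<Rightarrow> int) \<Rightarrow> real"
  assumes "additive_on (cycle_module src tgt) c"
    and "\<And>es. simple_dicycle src tgt es \<Longrightarrow> c (cycle_vec es) > - real (length es)"
  shows "\<exists>c'. additive_on UNIV c' \<and> (\<forall>x \<in> cycle_module src tgt. c' x = c x)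
              \<and> (\<forall>e. c' (edge_vec e) > -1)"
proof -
  let ?M = "cycle_module src tgt"
  obtain xs :: "'e list" where xs: "set xs = UNIV" using finite_list[OF finite_UNIV] by blast
  obtain H f where Hf: "sg H" "?M \<subseteq> H" "set (map edge_vec xs) \<subseteq> H" "additive_on H f"
    "\<forall>h\<in>?M. f h = c h"
    using ext_list[OF sg_cm assms(1), of "map edge_vec xs"] by blast
  have evH: "edge_vec e \<in> H" for e using Hf(3) xs by auto
  define \<alpha> where "\<alpha> e = f (edge_vec e)" for e
  have cycC: "c (cycle_vec es) = (\<Sum>e\<in>set es. \<alpha> e)" if "simple_dicycle src tgt es" for es
  proof -
    have "cycle_vec es \<in> ?M" using that by (rule cycle_module.cyc)
    then have "c (cycle_vec es) = f (cycle_vec es)" using Hf(5) by simp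
    also have "\<dots> = (\<Sum>e\<in>set es. \<alpha> e)" unfolding cycle_vec_sum \<alpha>_def
      using add_sum[OF Hf(1) Hf(4), of "set es" edge_vec] evH by simp
    finally show ?thesis .
  qed
  have lenc: "length es = card (set es)" if "simple_dicycle src tgt es" for es
    using that by (simp add: simple_dicycle_def distinct_card)
  have pos: "0 < (\<Sum>e\<in>set es. \<alpha> e + 1)" if "simple_dicycle src tgt es" for es
    using assms(2)[OF that] cycC[OF that] lenc[OF that] by (simp add: sum.distrib)
  define T where "T = {es. simple_dicycle src tgt es}"
  have finT: "finite T"
    by (rule finite_subset[OF _ finite_distinct_lists]) (auto simp: T_def simple_dicycle_def)
  define q where "q es = (\<Sum>e\<in>set es. \<alpha> e + 1) / real (length es)" for es
  have qpos: "es \<in> T \<Longrightarrow> q es > 0" for es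
    using pos unfolding q_def T_def by (auto simp: simple_dicycle_def)
  define \<epsilon> where "\<epsilon> = Min (insert 1 (q ` T)) / 2"
  have Mpos: "Min (insert 1 (q ` T)) > 0" using finT qpos by (subst Min_gr_iff) auto
  have epos: "\<epsilon> > 0" using Mpos unfolding \<epsilon>_def by simp
  have elt: "\<epsilon> < q es" if "es \<in> T" for es
  proof -
    have "Min (insert 1 (q ` T)) \<le> q es" using finT that by (intro Min_le) auto
    then show ?thesis using Mpos unfolding \<epsilon>_def by simp
  qed
  define a where "a e = \<alpha> e + 1 - \<epsilon>" for e
  have Ha: "0 \<le> sum_list (map a es)" if "simple_dicycle src tgt es" for es
  proof -
    have d: "distinct es" "es \<noteq> []" using that by (auto simp: simple_dicycle_def)
    have "\<epsilon> * real (length es) < q es * real (length es)"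
      using elt[of es] that d(2) by (simp add: T_def)
    also have "\<dots> = (\<Sum>e\<in>set es. \<alpha> e + 1)" using d(2) by (simp add: q_def)
    finally have "\<epsilon> * real (length es) < (\<Sum>e\<in>set es. \<alpha> e + 1)" .
    moreover have "sum_list (map a es) = (\<Sum>e\<in>set es. \<alpha> e + 1) - \<epsilon> * real (length es)"
      using d(1) lenc[OF that] unfolding a_def
      by (simp add: sum.distinct_set_conv_list[symmetric] sum_subtractf)
    ultimately show ?thesis by simp
  qed
  obtain p where p: "\<forall>e. p (tgt e) \<le> p (src e) + a e" using bellman_ford[of src tgt a] Ha by blast
  define \<beta> where "\<beta> e = \<alpha> e + p (src e) - p (tgt e)" for e
  define c' where "c' x = (\<Sum>e\<in>UNIV. real_of_int (x e) * \<beta> e)" for x :: "'e \<Rightarrow> int"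
  have c'add: "additive_on UNIV c'"
    unfolding additive_on_def c'_def by (simp add: sum.distrib distrib_right)
  have c'edge: "c' (edge_vec e) = \<beta> e" for e
  proof -
    have "c' (edge_vec e) = (\<Sum>e'\<in>UNIV. if e' = e then \<beta> e' else 0)"
      unfolding c'_def edge_vec_def by (rule sum.cong) auto
    then show ?thesis by simp
  qed
  have c'cyc: "c' (cycle_vec es) = (\<Sum>e\<in>set es. \<beta> e)" for es
  proof -
    have "c' (cycle_vec es) = (\<Sum>e\<in>UNIV. if e \<in> set es then \<beta> e else 0)"
      unfolding c'_def cycle_vec_def by (rule sum.cong) auto
    also have "\<dots> = (\<Sum>e\<in>set es. \<beta> e)" by (simp add: sum.If_cases)
    finally show ?thesis .
  qed
  have agree: "x \<in> ?M \<Longrightarrow> c' x = c x" for x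
  proof (induction x rule: cycle_module.induct)
    case zero
    have "c 0 = 0" using add_zero[OF assms(1)] by (simp add: cycle_module.zero)
    moreover have "c' 0 = 0" unfolding c'_def by simp
    ultimately show ?case by (simp only:)
  next
    case (cyc es)
    have "c' (cycle_vec es) = (\<Sum>e\<in>set es. \<alpha> e) + (\<Sum>e\<in>set es. p (src e) - p (tgt e))"
      unfolding c'cyc \<beta>_def by (simp add: sum.distrib[symmetric] algebra_simps)
    then show ?case using telescope[OF cyc, of p] cycC[OF cyc] by simp
  next
    case (add x y)
    have "c' (x + y) = c' x + c' y" using c'add unfolding additive_on_def by blast
    moreover have "c (x + y) = c x + c y" using add.hyps assms(1) unfolding additive_on_def by blast
    ultimately show ?case using add.IH by (simp only:)
  next
    case (neg x)
    have "c (- x) = - c x" using add_neg[OF sg_cm assms(1) neg.hyps(1)] .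
    moreover have "c' (- x) = - c' x" unfolding c'_def by (simp add: sum_negf)
    ultimately show ?case using neg.IH by (simp only:)
  qed
  show ?thesis
  proof (intro exI[where x=c'] conjI ballI allI)
    show "additive_on UNIV c'" by (rule c'add)
    show "c' x = c x" if "x \<in> ?M" for x using agree that by blast
    fix e
    have "\<beta> e + 1 = a e + \<epsilon> + p (src e) - p (tgt e)" unfolding \<beta>_def a_def by simp
    then have "\<beta> e + 1 \<ge> \<epsilon>" using p[rule_format, of e] by simp
    then show "c' (edge_vec e) > -1" using c'edge epos by simp
  qed
qed

end
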